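(* Let $\mathcal N$ be an indecomposable Clifford Nil-algebra of rank $4$ with nilpotency index $NI(\mathcal N)=1$. Then $\mathcal N$ is equivalent either to one of the following quasiNil-algebras, or to the dual of one of them: (i) $\mathcal N_{12}=V_1$, $\mathcal N_{13}=V_2$, $\mathcal N_{14}=V_3$, all other $\mathcal N_{ij}=0$; (ii) $\mathcal N_{13}=V_1$, $\mathcal N_{14}=V_2$, $\mathcal N_{24}=V_3$, all other $\mathcal N_{ij}=0$; (iii) $\mathcal N_{13}=V_1$, $\mathcal N_{14}=V_2$, $\mathcal N_{23}=V_3$, $\mathcal N_{24}=V_4$, all other $\mathcal N_{ij}=0$. Here $V_1,\dots,V_4$ are arbitrary nonzero Euclidean spaces and all products $\mu_{ijk}$ are zero. Conversely, each of (i)–(iii) is an indecomposable Clifford Nil-algebra of rank 4 with $NI=1$.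
   Context: All vector spaces are finite-dimensional real. A bilinear map $\mu:X\times Y\to Z$ of Euclidean spaces is isometric if $|\mu(x,y)|=|x|\,|y|$. For a Euclidean space $V$, $\mathrm{Cl}(V)$ is the Clifford algebra with $v\cdot v=-|v|^2$. A "$\mathrm{Cl}(V)$-module $S^0\oplus S^1$" always means a $\mathbb Z/2$-graded $\mathrm{Cl}(V)$-module ($V\cdot S^0\subset S^1$, $V\cdot S^1\subset S^0$) with an admissible Euclidean metric: $S^0\perp S^1$ and every $v\in V$ acts skew-symmetrically (so $|v\cdot s|=|v||s|$); the maps $V\times S^0\to S^1,(v,s)\mapsto v\cdot s$ and $S^0\times V\to S^1,(s,v)\mapsto v\cdot s$ are called Clifford multiplications. A quasiNil-algebra of rank $n$ is a Euclidean space $\mathcal N$ with an orthogonal decomposition $\mathcal N=\bigoplus_{1\le i<j\le n}\mathcal N_{ij}$ and bilinear isometric maps $\mu_{ijk}:\mathcal N_{ij}\times\mathcal N_{jk}\to\mathcal N_{ik}$ ($i<j<k$; $\mu_{ijk}=0$ iff one factor is $0$); elements are strictly upper triangular matrices $A=(a_{ij})$, $a_{ij}\in\mathcal N_{ij}$, with product $(AB)_{ik}=\sum_{i<j<k}\mu_{ijk}(a_{ij},b_{jk})$. It is Clifford if every nonzero $\mu_{ijk}$ is a Clifford multiplication (either $\mathcal N_{jk}\oplus\mathcal N_{ik}$ is a $\mathrm{Cl}(\mathcal N_{ij})$-module with $\mu_{ijk}(x,y)=x\cdot y$, or $\mathcal N_{ij}\oplus\mathcal N_{ik}$ is a $\mathrm{Cl}(\mathcal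 N_{jk})$-module with $\mu_{ijk}(x,y)=y\cdot x$). A Nil-algebra is an associative quasiNil-algebra satisfying the Vinberg condition: for all $l<i<j<k$, $a\in\mathcal N_{ik}$, $b\in\mathcal N_{jk}$, if $\langle a,\mu_{ijk}(x,b)\rangle=0$ for all $x\in\mathcal N_{ij}$ then $\langle\mu_{lik}(y,a),\mu_{ljk}(z,b)\rangle=0$ for all $y\in\mathcal N_{li},z\in\mathcal N_{lj}$. The nilpotency index $NI(\mathcal N)$ is the largest $m$ such that there are $i_0<i_1<\dots<i_m$ with $\mathcal N_{i_{r-1}i_r}\neq0$ for all $r$. An isomorphism is a linear isometry preserving each $\mathcal N_{ij}$ and all products. A renumbering by a permutation $\sigma$ with $\sigma(i)<\sigma(j)$ whenever $\mathcal N_{ij}\ne0$ sets $\mathcal N'_{\sigma(i)\sigma(j)}=\mathcal N_{ij}$ with the transported products; two quasiNil-algebras are equivalent if they are isomorphic after a renumbering. The dual $\mathcal N^\tau$ has $\mathcal N^\tau_{ij}=\mathcal N_{n+1-j,\,n+1-i}$ and $\mu^\tau_{ijk}(x,y)=\mu_{n+1-k,\,n+1-j,\,n+1-i}(y,x)$. A direct sum of quasiNil-algebras of ranks $n',n''$ is the rank $n'+n''$ block-diagonal quasiNil-algebra; $\mathcal N$ is indecomposable if it is not equivalent to a direct sum of two quasiNil-algebras of positive rank. *)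

theory Defs
  imports Complex_Main
begin

text \<open>Every finite-dimensional Euclidean space is isometric to standard
  R^d; we represent the Euclidean space N_ij by the dimension d i j, with vectors
  the functions nat => real vanishing from index d on, and the standard inner product.
  Indices of a rank n quasiNil-algebra range over {1..n}.\<close>

type_synonym rvec = "nat \<Rightarrow> real"
type_synonym dimfam = "nat \<Rightarrow> nat \<Rightarrow> nat"
type_synonym mulfam = "nat \<Rightarrow> nat \<Rightarrow> nat \<Rightarrow> rvec \<Rightarrow> rvec \<Rightarrow> rvec"

definition vecs :: "nat \<Rightarrow> rvec set" where
  "vecs d = {x. \<forall>t\<ge>d. x t = 0}"

definition ip :: "nat \<Rightarrow> rvec \<Rightarrow> rvec \<Rightarrow> real" where
  "ip d x y = (\<Sum>t<d. x t * y t)"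

definition nrm :: "nat \<Rightarrow> rvec \<Rightarrow> real" where
  "nrm d x = sqrt (ip d x x)"

definition vadd :: "rvec \<Rightarrow> rvec \<Rightarrow> rvec" where
  "vadd x y = (\<lambda>t. x t + y t)"

definition vscale :: "real \<Rightarrow> rvec \<Rightarrow> rvec" where
  "vscale r x = (\<lambda>t. r * x t)"

definition vzero :: rvec where "vzero = (\<lambda>t. 0)"

definition linear_on :: "nat \<Rightarrow> nat \<Rightarrow> (rvec \<Rightarrow> rvec) \<Rightarrow> bool" where
  "linear_on a c f \<longleftrightarrow>
     (\<forall>x\<in>vecs a. f x \<in> vecs c) \<and>
     (\<forall>x\<in>vecs a. \<forall>x'\<in>vecs a. f (vadd x x') = vadd (f x) (f x')) \<and>
     (\<forall>r. \<forall>x\<in>vecs a. f (vscale r x) = vscale r (f x))"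

definition bilinear_on :: "nat \<Rightarrow> nat \<Rightarrow> nat \<Rightarrow> (rvec \<Rightarrow> rvec \<Rightarrow> rvec) \<Rightarrow> bool" where
  "bilinear_on a b c m \<longleftrightarrow>
     (\<forall>x\<in>vecs a. \<forall>y\<in>vecs b. m x y \<in> vecs c) \<and>
     (\<forall>x\<in>vecs a. \<forall>x'\<in>vecs a. \<forall>y\<in>vecs b. m (vadd x x') y = vadd (m x y) (m x' y)) \<and>
     (\<forall>r. \<forall>x\<in>vecs a. \<forall>y\<in>vecs b. m (vscale r x) y = vscale r (m x y)) \<and>
     (\<forall>x\<in>vecs a. \<forall>y\<in>vecs b. \<forall>y'\<in>vecs b. m x (vadd y y') = vadd (m x y) (m x y')) \<and>
     (\<forall>r. \<forall>x\<in>vecs a. \<forall>y\<in>vecs b. m x (vscale r y) = vscale r (m x y))"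

definition isometric_on :: "nat \<Rightarrow> nat \<Rightarrow> nat \<Rightarrow> (rvec \<Rightarrow> rvec \<Rightarrow> rvec) \<Rightarrow> bool" where
  "isometric_on a b c m \<longleftrightarrow> bilinear_on a b c m \<and>
     (\<forall>x\<in>vecs a. \<forall>y\<in>vecs b. nrm c (m x y) = nrm a x * nrm b y)"

definition quasiNil :: "nat \<Rightarrow> dimfam \<Rightarrow> mulfam \<Rightarrow> bool" where
  "quasiNil n d \<mu> \<longleftrightarrow> (\<forall>i j k. 1 \<le> i \<and> i < j \<and> j < k \<and> k \<le> n \<longrightarrow>
      isometric_on (d i j) (d j k) (d i k) (\<mu> i j k) \<and>
      ((\<forall>x\<in>vecs (d i j). \<forall>y\<in>vecs (d j k). \<mu> i j k x y = vzero) \<longleftrightarrow> (d i j = 0 \<or> d j k = 0)))"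

text \<open>m : V x S0 -> S1 is a Clifford multiplication: there is a Z/2-graded Cl(V)-module
  structure on the orthogonal sum S0 + S1 with admissible metric whose action
  V x S0 -> S1 is m. The action is rho(v)(s0,s1) = (c v s1, m v s0); we require
  rho(v)^2 = -|v|^2 and rho(v) skew-symmetric.\<close>
definition clifford_mult :: "nat \<Rightarrow> nat \<Rightarrow> nat \<Rightarrow> (rvec \<Rightarrow> rvec \<Rightarrow> rvec) \<Rightarrow> bool" where
  "clifford_mult dV d0 d1 m \<longleftrightarrow> bilinear_on dV d0 d1 m \<and>
     (\<exists>c. bilinear_on dV d1 d0 c \<and>
       (\<forall>v\<in>vecs dV.
          (\<forall>s\<in>vecs d0. c v (m v s) = vscale (- (nrm dV v)\<^sup>2) s) \<and>
          (\<forall>s\<in>vecs d1. m v (c v s) = vscale (- (nrm dV v)\<^sup>2) s) \<and>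
          (\<forall>s0\<in>vecs d0. \<forall>s1\<in>vecs d1. ip d1 (m v s0) s1 = - ip d0 s0 (c v s1))))"

definition clifford :: "nat \<Rightarrow> dimfam \<Rightarrow> mulfam \<Rightarrow> bool" where
  "clifford n d \<mu> \<longleftrightarrow> (\<forall>i j k. 1 \<le> i \<and> i < j \<and> j < k \<and> k \<le> n \<and> d i j \<noteq> 0 \<and> d j k \<noteq> 0 \<longrightarrow>
      clifford_mult (d i j) (d j k) (d i k) (\<mu> i j k) \<or>
      clifford_mult (d j k) (d i j) (d i k) (\<lambda>y x. \<mu> i j k x y))"

text \<open>elements: strictly upper triangular matrices\<close>
definition element :: "nat \<Rightarrow> dimfam \<Rightarrow> (nat \<Rightarrow> nat \<Rightarrow> rvec) \<Rightarrow> bool" where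
  "element n d A \<longleftrightarrow> (\<forall>i j. 1 \<le> i \<and> i < j \<and> j \<le> n \<longrightarrow> A i j \<in> vecs (d i j))"

definition mprod :: "mulfam \<Rightarrow> (nat \<Rightarrow> nat \<Rightarrow> rvec) \<Rightarrow> (nat \<Rightarrow> nat \<Rightarrow> rvec) \<Rightarrow> nat \<Rightarrow> nat \<Rightarrow> rvec" where
  "mprod \<mu> A B i k = (\<lambda>t. \<Sum>j\<in>{i<..<k}. \<mu> i j k (A i j) (B j k) t)"

definition associative :: "nat \<Rightarrow> dimfam \<Rightarrow> mulfam \<Rightarrow> bool" where
  "associative n d \<mu> \<longleftrightarrow> (\<forall>A B C. element n d A \<and> element n d B \<and> element n d C \<longrightarrow>
     (\<forall>i k. 1 \<le> i \<and> i < k \<and> k \<le> n \<longrightarrow>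
        mprod \<mu> (mprod \<mu> A B) C i k = mprod \<mu> A (mprod \<mu> B C) i k))"

definition vinberg :: "nat \<Rightarrow> dimfam \<Rightarrow> mulfam \<Rightarrow> bool" where
  "vinberg n d \<mu> \<longleftrightarrow> (\<forall>l i j k. 1 \<le> l \<and> l < i \<and> i < j \<and> j < k \<and> k \<le> n \<longrightarrow>
     (\<forall>a\<in>vecs (d i k). \<forall>b\<in>vecs (d j k).
        (\<forall>x\<in>vecs (d i j). ip (d i k) a (\<mu> i j k x b) = 0) \<longrightarrow>
        (\<forall>y\<in>vecs (d l i). \<forall>z\<in>vecs (d l j). ip (d l k) (\<mu> l i k y a) (\<mu> l j k z b) = 0)))"

definition nil_algebra :: "nat \<Rightarrow> dimfam \<Rightarrow> mulfam \<Rightarrow> bool" where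
  "nil_algebra n d \<mu> \<longleftrightarrow> quasiNil n d \<mu> \<and> associative n d \<mu> \<and> vinberg n d \<mu>"

definition clifford_nil_algebra :: "nat \<Rightarrow> dimfam \<Rightarrow> mulfam \<Rightarrow> bool" where
  "clifford_nil_algebra n d \<mu> \<longleftrightarrow> nil_algebra n d \<mu> \<and> clifford n d \<mu>"

definition nil_index :: "nat \<Rightarrow> dimfam \<Rightarrow> nat" where
  "nil_index n d = (GREATEST m. \<exists>\<iota>::nat \<Rightarrow> nat.
      (\<forall>r\<le>m. 1 \<le> \<iota> r \<and> \<iota> r \<le> n) \<and>
      (\<forall>r<m. \<iota> r < \<iota> (Suc r) \<and> d (\<iota> r) (\<iota> (Suc r)) \<noteq> 0))"

definition isomorphic :: "nat \<Rightarrow> dimfam \<Rightarrow> mulfam \<Rightarrow> dimfam \<Rightarrow> mulfam \<Rightarrow> bool" where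
  "isomorphic n d \<mu> d' \<mu>' \<longleftrightarrow> (\<exists>\<phi> :: nat \<Rightarrow> nat \<Rightarrow> rvec \<Rightarrow> rvec.
     (\<forall>i j. 1 \<le> i \<and> i < j \<and> j \<le> n \<longrightarrow>
        linear_on (d i j) (d' i j) (\<phi> i j) \<and>
        bij_betw (\<phi> i j) (vecs (d i j)) (vecs (d' i j)) \<and>
        (\<forall>x\<in>vecs (d i j). nrm (d' i j) (\<phi> i j x) = nrm (d i j) x)) \<and>
     (\<forall>i j k. 1 \<le> i \<and> i < j \<and> j < k \<and> k \<le> n \<longrightarrow>
        (\<forall>x\<in>vecs (d i j). \<forall>y\<in>vecs (d j k).
           \<phi> i k (\<mu> i j k x y) = \<mu>' i j k (\<phi> i j x) (\<phi> j k y))))"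

definition renumbering :: "nat \<Rightarrow> dimfam \<Rightarrow> (nat \<Rightarrow> nat) \<Rightarrow> bool" where
  "renumbering n d \<sigma> \<longleftrightarrow> bij_betw \<sigma> {1..n} {1..n} \<and>
     (\<forall>i j. 1 \<le> i \<and> i < j \<and> j \<le> n \<and> d i j \<noteq> 0 \<longrightarrow> \<sigma> i < \<sigma> j)"

definition renum_d :: "nat \<Rightarrow> (nat \<Rightarrow> nat) \<Rightarrow> dimfam \<Rightarrow> dimfam" where
  "renum_d n \<sigma> d p q = (let i = inv_into {1..n} \<sigma> p; j = inv_into {1..n} \<sigma> q in
      if i < j then d i j else 0)"

definition renum_mu :: "nat \<Rightarrow> (nat \<Rightarrow> nat) \<Rightarrow> mulfam \<Rightarrow> mulfam" where
  "renum_mu n \<sigma> \<mu> p q r = (let i = inv_into {1..n} \<sigma> p; j = inv_into {1..n} \<sigma> q;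
      k = inv_into {1..n} \<sigma> r in
      if i < j \<and> j < k then \<mu> i j k else (\<lambda>x y. vzero))"

definition equivalent :: "nat \<Rightarrow> dimfam \<Rightarrow> mulfam \<Rightarrow> dimfam \<Rightarrow> mulfam \<Rightarrow> bool" where
  "equivalent n d \<mu> d' \<mu>' \<longleftrightarrow> (\<exists>\<sigma>. renumbering n d \<sigma> \<and>
      isomorphic n (renum_d n \<sigma> d) (renum_mu n \<sigma> \<mu>) d' \<mu>')"

definition dual_d :: "nat \<Rightarrow> dimfam \<Rightarrow> dimfam" where
  "dual_d n d i j = d (n + 1 - j) (n + 1 - i)"

definition dual_mu :: "nat \<Rightarrow> mulfam \<Rightarrow> mulfam" where
  "dual_mu n \<mu> i j k x y = \<mu> (n + 1 - k) (n + 1 - j) (n + 1 - i) y x"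

definition dsum_d :: "nat \<Rightarrow> dimfam \<Rightarrow> dimfam \<Rightarrow> dimfam" where
  "dsum_d n1 d1 d2 i j = (if j \<le> n1 then d1 i j
      else if n1 < i then d2 (i - n1) (j - n1) else 0)"

definition dsum_mu :: "nat \<Rightarrow> mulfam \<Rightarrow> mulfam \<Rightarrow> mulfam" where
  "dsum_mu n1 \<mu>1 \<mu>2 i j k = (if k \<le> n1 then \<mu>1 i j k
      else if n1 < i then \<mu>2 (i - n1) (j - n1) (k - n1) else (\<lambda>x y. vzero))"

definition indecomposable :: "nat \<Rightarrow> dimfam \<Rightarrow> mulfam \<Rightarrow> bool" where
  "indecomposable n d \<mu> \<longleftrightarrow> \<not> (\<exists>n1 d1 \<mu>1 n2 d2 \<mu>2.
      0 < n1 \<and> 0 < n2 \<and> n = n1 + n2 \<and> quasiNil n1 d1 \<mu>1 \<and> quasiNil n2 d2 \<mu>2 \<and>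
      equivalent n d \<mu> (dsum_d n1 d1 d2) (dsum_mu n1 \<mu>1 \<mu>2))"

definition zero_mu :: mulfam where "zero_mu i j k x y = vzero"

definition pat1 :: "nat \<Rightarrow> nat \<Rightarrow> nat \<Rightarrow> dimfam" where
  "pat1 v1 v2 v3 i j = (if (i, j) = (1, 2) then v1 else if (i, j) = (1, 3) then v2
      else if (i, j) = (1, 4) then v3 else 0)"

definition pat2 :: "nat \<Rightarrow> nat \<Rightarrow> nat \<Rightarrow> dimfam" where
  "pat2 v1 v2 v3 i j = (if (i, j) = (1, 3) then v1 else if (i, j) = (1, 4) then v2
      else if (i, j) = (2, 4) then v3 else 0)"

definition pat3 :: "nat \<Rightarrow> nat \<Rightarrow> nat \<Rightarrow> nat \<Rightarrow> dimfam" where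
  "pat3 v1 v2 v3 v4 i j = (if (i, j) = (1, 3) then v1 else if (i, j) = (1, 4) then v2
      else if (i, j) = (2, 3) then v3 else if (i, j) = (2, 4) then v4 else 0)"

definition equiv_or_dual :: "nat \<Rightarrow> dimfam \<Rightarrow> mulfam \<Rightarrow> dimfam \<Rightarrow> mulfam \<Rightarrow> bool" where
  "equiv_or_dual n d \<mu> d' \<mu>' \<longleftrightarrow>
     equivalent n d \<mu> d' \<mu>' \<or> equivalent n d \<mu> (dual_d n d') (dual_mu n \<mu>')"

end

theory Submission
  imports Defs
begin


lemma pairs4: "(\<forall>p q. 1 \<le> p \<and> p < q \<and> q \<le> (4::nat) \<longrightarrow> P p q) \<longleftrightarrow>
  P 1 2 \<and> P 1 3 \<and> P 1 4 \<and> P 2 3 \<and> P 2 4 \<and> P 3 4"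
proof
  assume "P 1 2 \<and> P 1 3 \<and> P 1 4 \<and> P 2 3 \<and> P 2 4 \<and> P 3 4"
  moreover have "1 \<le> p \<and> p < q \<and> q \<le> (4::nat) \<Longrightarrow> (p,q) \<in> {(1,2),(1,3),(1,4),(2,3),(2,4),(3,4)}" for p q
    by auto
  ultimately show "\<forall>p q. 1 \<le> p \<and> p < q \<and> q \<le> (4::nat) \<longrightarrow> P p q" by fastforce
qed auto

lemma triples4: "(\<forall>i j k. 1 \<le> i \<and> i < j \<and> j < k \<and> k \<le> (4::nat) \<longrightarrow> P i j k) \<longleftrightarrow>
  P 1 2 3 \<and> P 1 2 4 \<and> P 1 3 4 \<and> P 2 3 4"
proof
  assume "P 1 2 3 \<and> P 1 2 4 \<and> P 1 3 4 \<and> P 2 3 4"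
  moreover have "1 \<le> i \<and> i < j \<and> j < k \<and> k \<le> (4::nat) \<Longrightarrow> (i,j,k) \<in> {(1,2,3),(1,2,4),(1,3,4),(2,3,4)}" for i j k
    by auto
  ultimately show "\<forall>i j k. 1 \<le> i \<and> i < j \<and> j < k \<and> k \<le> (4::nat) \<longrightarrow> P i j k" by fastforce
qed auto

lemma ball4: "(\<forall>x\<in>{1..4::nat}. P x) \<longleftrightarrow> P 1 \<and> P 2 \<and> P 3 \<and> P 4"
proof -
  have "{1..4::nat} = {1,2,3,4}" by auto
  then show ?thesis by simp
qed

definition NIp :: "dimfam \<Rightarrow> bool" where
  "NIp d \<longleftrightarrow> (\<forall>i j k. 1 \<le> i \<and> i < j \<and> j < k \<and> k \<le> (4::nat) \<longrightarrow> d i j = 0 \<or> d j k = 0)"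

lemma vecs0: "vecs 0 = {vzero}"
  by (auto simp: vecs_def vzero_def)

lemma vecs_two: "0 < b \<Longrightarrow> vzero \<in> vecs b \<and> (\<lambda>t. if t = 0 then 1 else 0) \<in> vecs b \<and> vzero \<noteq> (\<lambda>t. if t = 0 then 1 else 0)"
  by (auto simp: vecs_def vzero_def fun_eq_iff)

lemma vecs_bij_zero:
  assumes bij: "bij_betw f (vecs a) (vecs b)" shows "a = 0 \<longleftrightarrow> b = 0"
proof
  assume a: "a = 0"
  have im: "vecs b = f ` vecs a" using bij by (simp add: bij_betw_def)
  show "b = 0"
  proof (rule ccontr)
    assume "b \<noteq> 0"
    then have "0 < b" by simp
    from vecs_two[OF this] obtain x y where "x \<in> vecs b" "y \<in> vecs b" "x \<noteq> y" by blast
    then show False using im a vecs0 by auto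
  qed
next
  assume b: "b = 0"
  show "a = 0"
  proof (rule ccontr)
    assume "a \<noteq> 0"
    then have "0 < a" by simp
    from vecs_two[OF this] obtain x y where xy: "x \<in> vecs a" "y \<in> vecs a" "x \<noteq> y" by blast
    have "f x \<in> vecs b" "f y \<in> vecs b" using bij xy bij_betwE by blast+
    then have "f x = f y" using b vecs0 by auto
    moreover have "inj_on f (vecs a)" using bij by (simp add: bij_betw_def)
    ultimately show False using xy by (auto simp: inj_on_def)
  qed
qed

lemma mu_zero:
  assumes Q: "quasiNil 4 d \<mu>" and NI: "NIp d"
    and "1 \<le> i" "i < j" "j < k" "k \<le> 4" "x \<in> vecs (d i j)" "y \<in> vecs (d j k)"
  shows "\<mu> i j k x y = vzero"
  using Q NI assms(3-) unfolding quasiNil_def NIp_def by blast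

lemma linear_id: "linear_on a a (\<lambda>x. x)"
  by (simp add: linear_on_def)

lemma equiv_via:
  fixes \<sigma> \<tau> :: "nat \<Rightarrow> nat"
  assumes Q: "quasiNil 4 d \<mu>" and NI: "NIp d"
    and inv1: "\<forall>x\<in>{1..4}. \<tau> (\<sigma> x) = x" and inv2: "\<forall>x\<in>{1..4}. \<sigma> (\<tau> x) = x"
    and r1: "\<forall>x\<in>{1..4}. \<sigma> x \<in> {1..4}" and r2: "\<forall>x\<in>{1..4}. \<tau> x \<in> {1..4}"
    and ord: "\<forall>i j. 1 \<le> i \<and> i < j \<and> j \<le> 4 \<longrightarrow> d i j \<noteq> 0 \<longrightarrow> \<sigma> i < \<sigma> j"
    and D: "\<forall>p q. 1 \<le> p \<and> p < q \<and> q \<le> 4 \<longrightarrow> D p q = (if \<tau> p < \<tau> q then d (\<tau> p) (\<tau> q) else 0)"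
    and M: "\<forall>i j k x y. \<mu>' i j k x y = vzero"
  shows "equivalent 4 d \<mu> D \<mu>'"
proof -
  have inj: "inj_on \<sigma> {1..4}" using inv1 by (metis inj_on_inverseI)
  have iv: "inv_into {1..4} \<sigma> p = \<tau> p" if "p \<in> {1..4}" for p
    by (rule inv_into_f_eq[OF inj]) (use that r2 inv2 in auto)
  have ren: "renumbering 4 d \<sigma>"
    unfolding renumbering_def
  proof
    show "bij_betw \<sigma> {1..4} {1..4}"
      by (rule bij_betw_byWitness[where f'=\<tau>]) (use inv1 inv2 r1 r2 in auto)
  qed (use ord in auto)
  have rd: "renum_d 4 \<sigma> d p q = D p q" if "1 \<le> p" "p < q" "q \<le> 4" for p q
    using that D iv unfolding renum_d_def Let_def by auto
  have iso: "isomorphic 4 (renum_d 4 \<sigma> d) (renum_mu 4 \<sigma> \<mu>) D \<mu>'"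
    unfolding isomorphic_def
  proof (rule exI[where x="\<lambda>i j x. x"], rule conjI; intro allI impI)
    fix i j :: nat assume h: "1 \<le> i \<and> i < j \<and> j \<le> 4"
    then show "linear_on (renum_d 4 \<sigma> d i j) (D i j) (\<lambda>x. x) \<and>
         bij_betw (\<lambda>x. x) (vecs (renum_d 4 \<sigma> d i j)) (vecs (D i j)) \<and>
         (\<forall>x\<in>vecs (renum_d 4 \<sigma> d i j). nrm (D i j) x = nrm (renum_d 4 \<sigma> d i j) x)"
      using rd[of i j] by (simp add: linear_id bij_betw_id[unfolded id_def])
  next
    fix i j k :: nat assume h: "1 \<le> i \<and> i < j \<and> j < k \<and> k \<le> 4"
    show "\<forall>x\<in>vecs (renum_d 4 \<sigma> d i j). \<forall>y\<in>vecs (renum_d 4 \<sigma> d j k).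
           renum_mu 4 \<sigma> \<mu> i j k x y = \<mu>' i j k x y"
    proof (intro ballI)
      fix x y assume x: "x \<in> vecs (renum_d 4 \<sigma> d i j)" and y: "y \<in> vecs (renum_d 4 \<sigma> d j k)"
      have ii: "i \<in> {1..4}" "j \<in> {1..4}" "k \<in> {1..4}" using h by auto
      show "renum_mu 4 \<sigma> \<mu> i j k x y = \<mu>' i j k x y"
      proof (cases "\<tau> i < \<tau> j \<and> \<tau> j < \<tau> k")
        case True
        have x': "x \<in> vecs (d (\<tau> i) (\<tau> j))" using x True ii iv unfolding renum_d_def Let_def by auto
        have y': "y \<in> vecs (d (\<tau> j) (\<tau> k))" using y True ii iv unfolding renum_d_def Let_def by auto
        have "\<mu> (\<tau> i) (\<tau> j) (\<tau> k) x y = vzero"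
          by (rule mu_zero[OF Q NI]) (use True ii r2 x' y' in auto)
        then show ?thesis using True ii iv M unfolding renum_mu_def Let_def by auto
      next
        case False
        then show ?thesis using ii iv M unfolding renum_mu_def Let_def by auto
      qed
    qed
  qed
  show ?thesis unfolding equivalent_def using ren iso by blast
qed


lemma nrm_vzero: "nrm c vzero = 0"
  by (simp add: nrm_def ip_def vzero_def)

lemma nrm_dim0: "nrm 0 x = 0"
  by (simp add: nrm_def ip_def)

lemma quasiNil_zero:
  assumes "\<forall>i j k. 1 \<le> i \<and> i < j \<and> j < k \<and> k \<le> m \<longrightarrow> e i j = 0 \<or> e j k = 0"
  shows "quasiNil m e zero_mu"
  unfolding quasiNil_def
proof (intro allI impI conjI)
  fix i j k assume h: "1 \<le> i \<and> i < j \<and> j < k \<and> k \<le> m"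
  then have z: "e i j = 0 \<or> e j k = 0" using assms[rule_format, OF h] by simp
  have "vzero \<in> vecs c" for c by (simp add: vecs_def vzero_def)
  moreover have "vadd vzero vzero = vzero" by (simp add: vadd_def vzero_def)
  moreover have "vscale r vzero = vzero" for r by (simp add: vscale_def vzero_def)
  ultimately have "bilinear_on (e i j) (e j k) (e i k) (zero_mu i j k)"
    unfolding bilinear_on_def zero_mu_def by simp
  moreover have "\<forall>x\<in>vecs (e i j). \<forall>y\<in>vecs (e j k). nrm (e i k) (zero_mu i j k x y) = nrm (e i j) x * nrm (e j k) y"
  proof (intro ballI)
    fix x y
    show "nrm (e i k) (zero_mu i j k x y) = nrm (e i j) x * nrm (e j k) y"
      using z unfolding zero_mu_def nrm_vzero by (metis mult_zero_left mult_zero_right nrm_dim0)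
  qed
  ultimately show "isometric_on (e i j) (e j k) (e i k) (zero_mu i j k)"
    unfolding isometric_on_def by blast
  show "(\<forall>x\<in>vecs (e i j). \<forall>y\<in>vecs (e j k). zero_mu i j k x y = vzero) = (e i j = 0 \<or> e j k = 0)"
    using z by (simp add: zero_mu_def)
qed

lemma decomp:
  fixes \<sigma> \<tau> :: "nat \<Rightarrow> nat"
  assumes Q: "quasiNil 4 d \<mu>" and NI: "NIp d"
    and inv1: "\<forall>x\<in>{1..4}. \<tau> (\<sigma> x) = x" and inv2: "\<forall>x\<in>{1..4}. \<sigma> (\<tau> x) = x"
    and r1: "\<forall>x\<in>{1..4}. \<sigma> x \<in> {1..4}" and r2: "\<forall>x\<in>{1..4}. \<tau> x \<in> {1..4}"
    and ord: "\<forall>i j. 1 \<le> i \<and> i < j \<and> j \<le> 4 \<longrightarrow> d i j \<noteq> 0 \<longrightarrow> \<sigma> i < \<sigma> j"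
    and n1: "1 \<le> nn" "nn < 4"
    and cross: "\<forall>p q. 1 \<le> p \<and> p < q \<and> q \<le> 4 \<longrightarrow> p \<le> nn \<longrightarrow> nn < q \<longrightarrow> \<tau> p < \<tau> q \<longrightarrow> d (\<tau> p) (\<tau> q) = 0"
  shows "\<not> indecomposable 4 d \<mu>"
proof -
  define d' where "d' p q = (if \<tau> p < \<tau> q then d (\<tau> p) (\<tau> q) else 0)" for p q
  define d1 where "d1 = d'"
  define d2 where "d2 i j = d' (i + nn) (j + nn)" for i j
  have NI': "d' i j = 0 \<or> d' j k = 0" if "1 \<le> i" "i < j" "j < k" "k \<le> 4" for i j k
  proof (rule ccontr)
    assume "\<not> (d' i j = 0 \<or> d' j k = 0)"
    then have a: "\<tau> i < \<tau> j" "\<tau> j < \<tau> k" "d (\<tau> i) (\<tau> j) \<noteq> 0" "d (\<tau> j) (\<tau> k) \<noteq> 0"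
      by (auto simp: d'_def split: if_splits)
    have "\<tau> i \<in> {1..4}" "\<tau> k \<in> {1..4}" using r2 that by auto
    then show False using NI[unfolded NIp_def, rule_format, of "\<tau> i" "\<tau> j" "\<tau> k"] a by simp
  qed
  have q1: "quasiNil nn d1 zero_mu"
    by (rule quasiNil_zero) (use NI' n1 in \<open>auto simp: d1_def\<close>)
  have q2: "quasiNil (4 - nn) d2 zero_mu"
  proof (rule quasiNil_zero, intro allI impI)
    fix i j k :: nat assume h: "1 \<le> i \<and> i < j \<and> j < k \<and> k \<le> 4 - nn"
    show "d2 i j = 0 \<or> d2 j k = 0" unfolding d2_def
      by (rule NI') (use h n1 in auto)
  qed
  have eq: "equivalent 4 d \<mu> (dsum_d nn d1 d2) (dsum_mu nn zero_mu zero_mu)"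
  proof (rule equiv_via[OF Q NI inv1 inv2 r1 r2 ord])
    show "\<forall>i j k x y. dsum_mu nn zero_mu zero_mu i j k x y = vzero"
      by (simp add: dsum_mu_def zero_mu_def)
    show "\<forall>p q. 1 \<le> p \<and> p < q \<and> q \<le> 4 \<longrightarrow>
       dsum_d nn d1 d2 p q = (if \<tau> p < \<tau> q then d (\<tau> p) (\<tau> q) else 0)"
    proof (intro allI impI)
      fix p q :: nat assume h: "1 \<le> p \<and> p < q \<and> q \<le> 4"
      show "dsum_d nn d1 d2 p q = (if \<tau> p < \<tau> q then d (\<tau> p) (\<tau> q) else 0)"
      proof (cases "q \<le> nn")
        case True then show ?thesis by (simp add: dsum_d_def d1_def d'_def)
      next
        case False
        show ?thesis
        proof (cases "nn < p")
          case True then show ?thesis using False by (simp add: dsum_d_def d2_def d'_def)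
        next
          case F2: False
          then show ?thesis using False cross h by (auto simp: dsum_d_def)
        qed
      qed
    qed
  qed
  have "4 = nn + (4 - nn)" "0 < nn" "0 < 4 - nn" using n1 by auto
  then show ?thesis unfolding indecomposable_def not_not
    apply (rule_tac x=nn in exI, rule_tac x=d1 in exI, rule_tac x=zero_mu in exI)
    apply (rule_tac x="4 - nn" in exI, rule_tac x=d2 in exI, rule_tac x=zero_mu in exI)
    using q1 q2 eq by simp
qed


lemma chain_bound:
  assumes "\<forall>r\<le>m. 1 \<le> \<iota> r \<and> \<iota> r \<le> n" "\<forall>r<m. \<iota> r < \<iota> (Suc r)"
  shows "m < n"
proof -
  have "r \<le> m \<Longrightarrow> r + 1 \<le> \<iota> r" for r
  proof (induction r)
    case 0 then show ?case using assms(1) by simp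
  next
    case (Suc r)
    then have "r + 1 \<le> \<iota> r" "\<iota> r < \<iota> (Suc r)" using assms(2) by auto
    then show ?case by simp
  qed
  then have "m + 1 \<le> \<iota> m" by simp
  moreover have "\<iota> m \<le> n" using assms(1) by simp
  ultimately show ?thesis by simp
qed

lemma nil_index_NI:
  assumes "nil_index 4 d = 1" shows "NIp d"
  unfolding NIp_def
proof (intro allI impI, rule ccontr)
  fix i j k :: nat
  assume h: "1 \<le> i \<and> i < j \<and> j < k \<and> k \<le> 4" and c: "\<not> (d i j = 0 \<or> d j k = 0)"
  let ?P = "\<lambda>m. \<exists>\<iota>::nat \<Rightarrow> nat. (\<forall>r\<le>m. 1 \<le> \<iota> r \<and> \<iota> r \<le> 4) \<and>
      (\<forall>r<m. \<iota> r < \<iota> (Suc r) \<and> d (\<iota> r) (\<iota> (Suc r)) \<noteq> 0)"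
  define \<iota> where "\<iota> r = (if r = 0 then i else if r = 1 then j else k)" for r :: nat
  have "?P 2"
  proof (rule exI[of _ \<iota>], rule conjI; intro allI impI)
    fix r :: nat assume "r \<le> 2"
    then have "r = 0 \<or> r = 1 \<or> r = 2" by auto
    then show "1 \<le> \<iota> r \<and> \<iota> r \<le> 4" using h by (auto simp: \<iota>_def)
  next
    fix r :: nat assume "r < 2"
    then have "r = 0 \<or> r = 1" by auto
    then show "\<iota> r < \<iota> (Suc r) \<and> d (\<iota> r) (\<iota> (Suc r)) \<noteq> 0" using h c by (auto simp: \<iota>_def)
  qed
  moreover have "\<forall>y. ?P y \<longrightarrow> y \<le> 4"
  proof (intro allI impI)
    fix y assume "?P y"
    then obtain \<kappa> :: "nat \<Rightarrow> nat" where "\<forall>r\<le>y. 1 \<le> \<kappa> r \<and> \<kappa> r \<le> 4" "\<forall>r<y. \<kappa> r < \<kappa> (Suc r)"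
      by auto
    from chain_bound[OF this] show "y \<le> 4" by simp
  qed
  ultimately have "2 \<le> Greatest ?P" using Greatest_le_nat[of ?P 2 4] by blast
  then show False using assms unfolding nil_index_def by simp
qed

lemma NI_nil_index:
  assumes NI: "NIp d" and e: "1 \<le> a" "a < b" "b \<le> 4" "d a b \<noteq> 0"
  shows "nil_index 4 d = 1"
  unfolding nil_index_def
proof (rule Greatest_equality)
  show "\<exists>\<iota>::nat \<Rightarrow> nat. (\<forall>r\<le>1. 1 \<le> \<iota> r \<and> \<iota> r \<le> 4) \<and>
      (\<forall>r<1. \<iota> r < \<iota> (Suc r) \<and> d (\<iota> r) (\<iota> (Suc r)) \<noteq> 0)"
  proof (rule exI[of _ "\<lambda>r. if r = 0 then a else b"], rule conjI; intro allI impI)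
    fix r :: nat assume "r \<le> 1"
    then have "r = 0 \<or> r = 1" by auto
    then show "1 \<le> (if r = 0 then a else b) \<and> (if r = 0 then a else b) \<le> 4" using e by auto
  next
    fix r :: nat assume "r < 1"
    then show "(if r = 0 then a else b) < (if Suc r = 0 then a else b) \<and>
       d (if r = 0 then a else b) (if Suc r = 0 then a else b) \<noteq> 0" using e by auto
  qed
next
  fix m assume "\<exists>\<iota>::nat \<Rightarrow> nat. (\<forall>r\<le>m. 1 \<le> \<iota> r \<and> \<iota> r \<le> 4) \<and>
      (\<forall>r<m. \<iota> r < \<iota> (Suc r) \<and> d (\<iota> r) (\<iota> (Suc r)) \<noteq> 0)"
  then obtain \<iota> :: "nat \<Rightarrow> nat" where c1: "\<forall>r\<le>m. 1 \<le> \<iota> r \<and> \<iota> r \<le> 4"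
    and c2: "\<forall>r<m. \<iota> r < \<iota> (Suc r) \<and> d (\<iota> r) (\<iota> (Suc r)) \<noteq> 0" by blast
  show "m \<le> 1"
  proof (rule ccontr)
    assume "\<not> m \<le> 1"
    then have m: "2 \<le> m" by simp
    have a: "\<iota> 0 < \<iota> 1" "d (\<iota> 0) (\<iota> 1) \<noteq> 0" "\<iota> 1 < \<iota> 2" "d (\<iota> 1) (\<iota> 2) \<noteq> 0"
      using c2 m by (auto simp: numeral_2_eq_2)
    have b: "1 \<le> \<iota> 0" "\<iota> 2 \<le> 4" using c1 m by auto
    show False using NI[unfolded NIp_def, rule_format, of "\<iota> 0" "\<iota> 1" "\<iota> 2"] a b by simp
  qed
qed

lemma NI_cnil:
  assumes NI: "NIp D" shows "clifford_nil_algebra 4 D zero_mu"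
proof -
  have q: "quasiNil 4 D zero_mu" by (rule quasiNil_zero) (use NI in \<open>simp add: NIp_def\<close>)
  have mp: "mprod zero_mu A B = (\<lambda>i k t. 0)" for A B
    by (simp add: mprod_def zero_mu_def vzero_def fun_eq_iff)
  have a: "associative 4 D zero_mu" by (simp add: associative_def mp)
  have v: "vinberg 4 D zero_mu" by (simp add: vinberg_def zero_mu_def ip_def vzero_def)
  have c: "clifford 4 D zero_mu" unfolding clifford_def
  proof (intro allI impI)
    fix i j k :: nat assume h: "1 \<le> i \<and> i < j \<and> j < k \<and> k \<le> 4 \<and> D i j \<noteq> 0 \<and> D j k \<noteq> 0"
    then show "clifford_mult (D i j) (D j k) (D i k) (zero_mu i j k) \<or>
      clifford_mult (D j k) (D i j) (D i k) (\<lambda>y x. zero_mu i j k x y)"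
      using NI[unfolded NIp_def, rule_format, of i j k] by simp
  qed
  show ?thesis using q a v c by (simp add: clifford_nil_algebra_def nil_algebra_def)
qed

lemma indec:
  assumes conn: "\<And>b::nat \<Rightarrow> bool. \<forall>i j. 1 \<le> i \<and> i < j \<and> j \<le> 4 \<longrightarrow> D i j \<noteq> 0 \<longrightarrow> b i = b j
     \<Longrightarrow> b 1 = b 2 \<and> b 2 = b 3 \<and> b 3 = b 4"
  shows "indecomposable 4 D \<mu>"
  unfolding indecomposable_def
proof
  assume "\<exists>n1 d1 \<mu>1 n2 d2 \<mu>2. 0 < n1 \<and> 0 < n2 \<and> 4 = n1 + n2 \<and> quasiNil n1 d1 \<mu>1 \<and> quasiNil n2 d2 \<mu>2 \<and>
      equivalent 4 D \<mu> (dsum_d n1 d1 d2) (dsum_mu n1 \<mu>1 \<mu>2)"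
  then obtain n1 d1 \<mu>1 n2 d2 \<mu>2 where n: "0 < n1" "0 < n2" "4 = n1 + n2"
    and eq: "equivalent 4 D \<mu> (dsum_d n1 d1 d2) (dsum_mu n1 \<mu>1 \<mu>2)" by blast
  then obtain \<sigma> where ren: "renumbering 4 D \<sigma>"
    and iso: "isomorphic 4 (renum_d 4 \<sigma> D) (renum_mu 4 \<sigma> \<mu>) (dsum_d n1 d1 d2) (dsum_mu n1 \<mu>1 \<mu>2)"
    unfolding equivalent_def by blast
  have bij: "bij_betw \<sigma> {1..4} {1..4}" and ord: "\<forall>i j. 1 \<le> i \<and> i < j \<and> j \<le> 4 \<and> D i j \<noteq> 0 \<longrightarrow> \<sigma> i < \<sigma> j"
    using ren unfolding renumbering_def by auto
  obtain \<phi> where phi0: "(\<forall>i j. 1 \<le> i \<and> i < j \<and> j \<le> 4 \<longrightarrow>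
        linear_on (renum_d 4 \<sigma> D i j) (dsum_d n1 d1 d2 i j) (\<phi> i j) \<and>
        bij_betw (\<phi> i j) (vecs (renum_d 4 \<sigma> D i j)) (vecs (dsum_d n1 d1 d2 i j)) \<and>
        (\<forall>x\<in>vecs (renum_d 4 \<sigma> D i j). nrm (dsum_d n1 d1 d2 i j) (\<phi> i j x) = nrm (renum_d 4 \<sigma> D i j) x)) \<and>
     (\<forall>i j k. 1 \<le> i \<and> i < j \<and> j < k \<and> k \<le> 4 \<longrightarrow>
        (\<forall>x\<in>vecs (renum_d 4 \<sigma> D i j). \<forall>y\<in>vecs (renum_d 4 \<sigma> D j k).
           \<phi> i k (renum_mu 4 \<sigma> \<mu> i j k x y) = dsum_mu n1 \<mu>1 \<mu>2 i j k (\<phi> i j x) (\<phi> j k y)))"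
    using iso[unfolded isomorphic_def] by (rule exE)
  have phi: "bij_betw (\<phi> i j) (vecs (renum_d 4 \<sigma> D i j)) (vecs (dsum_d n1 d1 d2 i j))"
    if "1 \<le> i" "i < j" "j \<le> 4" for i j
    using phi0[THEN conjunct1, rule_format, of i j] that by simp
  have inj: "inj_on \<sigma> {1..4}" using bij by (simp add: bij_betw_def)
  have inS: "x \<in> {1..4} \<Longrightarrow> \<sigma> x \<in> {1..4}" for x using bij bij_betwE by blast
  define b where "b i = (\<sigma> i \<le> n1)" for i
  have "\<forall>i j. 1 \<le> i \<and> i < j \<and> j \<le> 4 \<longrightarrow> D i j \<noteq> 0 \<longrightarrow> b i = b j"
  proof (intro allI impI)
    fix i j :: nat assume h: "1 \<le> i \<and> i < j \<and> j \<le> 4" and nz: "D i j \<noteq> 0"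
    have lt: "\<sigma> i < \<sigma> j" using ord[rule_format, of i j] h nz by simp
    have si: "\<sigma> i \<in> {1..4}" "\<sigma> j \<in> {1..4}" using inS h by auto
    have "inv_into {1..4} \<sigma> (\<sigma> i) = i" "inv_into {1..4} \<sigma> (\<sigma> j) = j"
      using inv_into_f_f[OF inj] h by auto
    then have rd: "renum_d 4 \<sigma> D (\<sigma> i) (\<sigma> j) = D i j" using h by (simp add: renum_d_def)
    have bj: "bij_betw (\<phi> (\<sigma> i) (\<sigma> j)) (vecs (renum_d 4 \<sigma> D (\<sigma> i) (\<sigma> j))) (vecs (dsum_d n1 d1 d2 (\<sigma> i) (\<sigma> j)))"
      using phi[of "\<sigma> i" "\<sigma> j"] si lt by simp
    have "dsum_d n1 d1 d2 (\<sigma> i) (\<sigma> j) \<noteq> 0" using vecs_bij_zero[OF bj] rd nz by simp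
    then show "b i = b j" using lt unfolding b_def dsum_d_def by (auto split: if_splits)
  qed
  from conn[OF this] have all: "b 1 = b 2 \<and> b 2 = b 3 \<and> b 3 = b 4" .
  have "\<sigma> ` {1..4} = {1..4}" using bij by (simp add: bij_betw_def)
  moreover have "(1::nat) \<in> {1..4}" "(4::nat) \<in> {1..4}" by auto
  ultimately have "1 \<in> \<sigma> ` {1..4}" "4 \<in> \<sigma> ` {1..4}" by simp_all
  then obtain x y where x: "x \<in> {1..4}" "\<sigma> x = 1" and y: "y \<in> {1..4}" "\<sigma> y = 4"
    by (metis imageE)
  have bx: "b x" using x n by (simp add: b_def)
  have by': "\<not> b y" using y n by (simp add: b_def)
  have "x = 1 \<or> x = 2 \<or> x = 3 \<or> x = 4" "y = 1 \<or> y = 2 \<or> y = 3 \<or> y = 4" using x y by auto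
  then show False using bx by' all by auto
qed


definition perm4 :: "nat \<Rightarrow> nat \<Rightarrow> nat \<Rightarrow> nat \<Rightarrow> nat \<Rightarrow> nat" where
  "perm4 a b c e x = (if x = 1 then a else if x = 2 then b else if x = 3 then c else e)"

definition concl :: "dimfam \<Rightarrow> mulfam \<Rightarrow> bool" where
  "concl d \<mu> \<longleftrightarrow> (\<exists>v1 v2 v3 v4. 0 < v1 \<and> 0 < v2 \<and> 0 < v3 \<and> 0 < v4 \<and>
               (equiv_or_dual 4 d \<mu> (pat1 v1 v2 v3) zero_mu \<or>
                equiv_or_dual 4 d \<mu> (pat2 v1 v2 v3) zero_mu \<or>
                equiv_or_dual 4 d \<mu> (pat3 v1 v2 v3 v4) zero_mu))"


lemma c000000:
  assumes Q: "quasiNil 4 d \<mu>" and NI: "NIp d" and h: "d 1 2 = 0" "d 1 3 = 0" "d 1 4 = 0" "d 2 3 = 0" "d 2 4 = 0" "d 3 4 = 0"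
  shows "concl d \<mu> \<or> \<not> indecomposable 4 d \<mu>"
proof -
  have "\<not> indecomposable 4 d \<mu>"
    apply (rule decomp[OF Q NI, where \<sigma>="(perm4 1 2 3 4)" and \<tau>="(perm4 1 2 3 4)" and nn=1])
    apply (unfold ball4 pairs4)
    using h apply (simp_all add: perm4_def)
    done
  then show ?thesis by simp
qed

lemma c000001:
  assumes Q: "quasiNil 4 d \<mu>" and NI: "NIp d" and h: "d 1 2 = 0" "d 1 3 = 0" "d 1 4 = 0" "d 2 3 = 0" "d 2 4 = 0" "d 3 4 \<noteq> 0"
  shows "concl d \<mu> \<or> \<not> indecomposable 4 d \<mu>"
proof -
  have "\<not> indecomposable 4 d \<mu>"
    apply (rule decomp[OF Q NI, where \<sigma>="(perm4 1 2 3 4)" and \<tau>="(perm4 1 2 3 4)" and nn=1])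
    apply (unfold ball4 pairs4)
    using h apply (simp_all add: perm4_def)
    done
  then show ?thesis by simp
qed

lemma c000010:
  assumes Q: "quasiNil 4 d \<mu>" and NI: "NIp d" and h: "d 1 2 = 0" "d 1 3 = 0" "d 1 4 = 0" "d 2 3 = 0" "d 2 4 \<noteq> 0" "d 3 4 = 0"
  shows "concl d \<mu> \<or> \<not> indecomposable 4 d \<mu>"
proof -
  have "\<not> indecomposable 4 d \<mu>"
    apply (rule decomp[OF Q NI, where \<sigma>="(perm4 1 2 3 4)" and \<tau>="(perm4 1 2 3 4)" and nn=1])
    apply (unfold ball4 pairs4)
    using h apply (simp_all add: perm4_def)
    done
  then show ?thesis by simp
qed

lemma c000011:
  assumes Q: "quasiNil 4 d \<mu>" and NI: "NIp d" and h: "d 1 2 = 0" "d 1 3 = 0" "d 1 4 = 0" "d 2 3 = 0" "d 2 4 \<noteq> 0" "d 3 4 \<noteq> 0"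
  shows "concl d \<mu> \<or> \<not> indecomposable 4 d \<mu>"
proof -
  have "\<not> indecomposable 4 d \<mu>"
    apply (rule decomp[OF Q NI, where \<sigma>="(perm4 1 2 3 4)" and \<tau>="(perm4 1 2 3 4)" and nn=1])
    apply (unfold ball4 pairs4)
    using h apply (simp_all add: perm4_def)
    done
  then show ?thesis by simp
qed

lemma c000100:
  assumes Q: "quasiNil 4 d \<mu>" and NI: "NIp d" and h: "d 1 2 = 0" "d 1 3 = 0" "d 1 4 = 0" "d 2 3 \<noteq> 0" "d 2 4 = 0" "d 3 4 = 0"
  shows "concl d \<mu> \<or> \<not> indecomposable 4 d \<mu>"
proof -
  have "\<not> indecomposable 4 d \<mu>"
    apply (rule decomp[OF Q NI, where \<sigma>="(perm4 1 2 3 4)" and \<tau>="(perm4 1 2 3 4)" and nn=1])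
    apply (unfold ball4 pairs4)
    using h apply (simp_all add: perm4_def)
    done
  then show ?thesis by simp
qed

lemma c000101:
  assumes Q: "quasiNil 4 d \<mu>" and NI: "NIp d" and h: "d 1 2 = 0" "d 1 3 = 0" "d 1 4 = 0" "d 2 3 \<noteq> 0" "d 2 4 = 0" "d 3 4 \<noteq> 0"
  shows "concl d \<mu> \<or> \<not> indecomposable 4 d \<mu>"
  using NI[unfolded NIp_def, rule_format, of 2 3 4] h by simp

lemma c000110:
  assumes Q: "quasiNil 4 d \<mu>" and NI: "NIp d" and h: "d 1 2 = 0" "d 1 3 = 0" "d 1 4 = 0" "d 2 3 \<noteq> 0" "d 2 4 \<noteq> 0" "d 3 4 = 0"
  shows "concl d \<mu> \<or> \<not> indecomposable 4 d \<mu>"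
proof -
  have "\<not> indecomposable 4 d \<mu>"
    apply (rule decomp[OF Q NI, where \<sigma>="(perm4 1 2 3 4)" and \<tau>="(perm4 1 2 3 4)" and nn=1])
    apply (unfold ball4 pairs4)
    using h apply (simp_all add: perm4_def)
    done
  then show ?thesis by simp
qed

lemma c000111:
  assumes Q: "quasiNil 4 d \<mu>" and NI: "NIp d" and h: "d 1 2 = 0" "d 1 3 = 0" "d 1 4 = 0" "d 2 3 \<noteq> 0" "d 2 4 \<noteq> 0" "d 3 4 \<noteq> 0"
  shows "concl d \<mu> \<or> \<not> indecomposable 4 d \<mu>"
  using NI[unfolded NIp_def, rule_format, of 2 3 4] h by simp

lemma c001000:
  assumes Q: "quasiNil 4 d \<mu>" and NI: "NIp d" and h: "d 1 2 = 0" "d 1 3 = 0" "d 1 4 \<noteq> 0" "d 2 3 = 0" "d 2 4 = 0" "d 3 4 = 0"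
  shows "concl d \<mu> \<or> \<not> indecomposable 4 d \<mu>"
proof -
  have "\<not> indecomposable 4 d \<mu>"
    apply (rule decomp[OF Q NI, where \<sigma>="(perm4 1 2 4 3)" and \<tau>="(perm4 1 2 4 3)" and nn=3])
    apply (unfold ball4 pairs4)
    using h apply (simp_all add: perm4_def)
    done
  then show ?thesis by simp
qed

lemma c001001:
  assumes Q: "quasiNil 4 d \<mu>" and NI: "NIp d" and h: "d 1 2 = 0" "d 1 3 = 0" "d 1 4 \<noteq> 0" "d 2 3 = 0" "d 2 4 = 0" "d 3 4 \<noteq> 0"
  shows "concl d \<mu> \<or> \<not> indecomposable 4 d \<mu>"
proof -
  have "\<not> indecomposable 4 d \<mu>"
    apply (rule decomp[OF Q NI, where \<sigma>="(perm4 1 4 2 3)" and \<tau>="(perm4 1 3 4 2)" and nn=3])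
    apply (unfold ball4 pairs4)
    using h apply (simp_all add: perm4_def)
    done
  then show ?thesis by simp
qed

lemma c001010:
  assumes Q: "quasiNil 4 d \<mu>" and NI: "NIp d" and h: "d 1 2 = 0" "d 1 3 = 0" "d 1 4 \<noteq> 0" "d 2 3 = 0" "d 2 4 \<noteq> 0" "d 3 4 = 0"
  shows "concl d \<mu> \<or> \<not> indecomposable 4 d \<mu>"
proof -
  have "\<not> indecomposable 4 d \<mu>"
    apply (rule decomp[OF Q NI, where \<sigma>="(perm4 1 2 4 3)" and \<tau>="(perm4 1 2 4 3)" and nn=3])
    apply (unfold ball4 pairs4)
    using h apply (simp_all add: perm4_def)
    done
  then show ?thesis by simp
qed

lemma c001011:
  assumes Q: "quasiNil 4 d \<mu>" and NI: "NIp d" and h: "d 1 2 = 0" "d 1 3 = 0" "d 1 4 \<noteq> 0" "d 2 3 = 0" "d 2 4 \<noteq> 0" "d 3 4 \<noteq> 0"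
  shows "concl d \<mu> \<or> \<not> indecomposable 4 d \<mu>"
proof -
  have eq: "equivalent 4 d \<mu> (dual_d 4 (pat1 (d 3 4) (d 2 4) (d 1 4))) (dual_mu 4 zero_mu)"
    apply (rule equiv_via[OF Q NI, where \<sigma>="(perm4 1 2 3 4)" and \<tau>="(perm4 1 2 3 4)"])
    apply (unfold ball4 pairs4)
    using h apply (simp_all add: perm4_def pat1_def pat2_def pat3_def dual_d_def dual_mu_def zero_mu_def)
    done
  show ?thesis unfolding concl_def equiv_or_dual_def
    apply (rule disjI1)
    apply (rule exI[of _ "(d 3 4)"], rule exI[of _ "(d 2 4)"], rule exI[of _ "(d 1 4)"], rule exI[of _ "1"])
    using eq h by simp
qed

lemma c001100:
  assumes Q: "quasiNil 4 d \<mu>" and NI: "NIp d" and h: "d 1 2 = 0" "d 1 3 = 0" "d 1 4 \<noteq> 0" "d 2 3 \<noteq> 0" "d 2 4 = 0" "d 3 4 = 0"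
  shows "concl d \<mu> \<or> \<not> indecomposable 4 d \<mu>"
proof -
  have "\<not> indecomposable 4 d \<mu>"
    apply (rule decomp[OF Q NI, where \<sigma>="(perm4 1 3 4 2)" and \<tau>="(perm4 1 4 2 3)" and nn=2])
    apply (unfold ball4 pairs4)
    using h apply (simp_all add: perm4_def)
    done
  then show ?thesis by simp
qed

lemma c001101:
  assumes Q: "quasiNil 4 d \<mu>" and NI: "NIp d" and h: "d 1 2 = 0" "d 1 3 = 0" "d 1 4 \<noteq> 0" "d 2 3 \<noteq> 0" "d 2 4 = 0" "d 3 4 \<noteq> 0"
  shows "concl d \<mu> \<or> \<not> indecomposable 4 d \<mu>"
  using NI[unfolded NIp_def, rule_format, of 2 3 4] h by simp

lemma c001110:
  assumes Q: "quasiNil 4 d \<mu>" and NI: "NIp d" and h: "d 1 2 = 0" "d 1 3 = 0" "d 1 4 \<noteq> 0" "d 2 3 \<noteq> 0" "d 2 4 \<noteq> 0" "d 3 4 = 0"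
  shows "concl d \<mu> \<or> \<not> indecomposable 4 d \<mu>"
proof -
  have eq: "equivalent 4 d \<mu> (pat2 (d 2 3) (d 2 4) (d 1 4)) (zero_mu)"
    apply (rule equiv_via[OF Q NI, where \<sigma>="(perm4 2 1 3 4)" and \<tau>="(perm4 2 1 3 4)"])
    apply (unfold ball4 pairs4)
    using h apply (simp_all add: perm4_def pat1_def pat2_def pat3_def dual_d_def dual_mu_def zero_mu_def)
    done
  show ?thesis unfolding concl_def equiv_or_dual_def
    apply (rule disjI1)
    apply (rule exI[of _ "(d 2 3)"], rule exI[of _ "(d 2 4)"], rule exI[of _ "(d 1 4)"], rule exI[of _ "1"])
    using eq h by simp
qed

lemma c001111:
  assumes Q: "quasiNil 4 d \<mu>" and NI: "NIp d" and h: "d 1 2 = 0" "d 1 3 = 0" "d 1 4 \<noteq> 0" "d 2 3 \<noteq> 0" "d 2 4 \<noteq> 0" "d 3 4 \<noteq> 0"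
  shows "concl d \<mu> \<or> \<not> indecomposable 4 d \<mu>"
  using NI[unfolded NIp_def, rule_format, of 2 3 4] h by simp

lemma c010000:
  assumes Q: "quasiNil 4 d \<mu>" and NI: "NIp d" and h: "d 1 2 = 0" "d 1 3 \<noteq> 0" "d 1 4 = 0" "d 2 3 = 0" "d 2 4 = 0" "d 3 4 = 0"
  shows "concl d \<mu> \<or> \<not> indecomposable 4 d \<mu>"
proof -
  have "\<not> indecomposable 4 d \<mu>"
    apply (rule decomp[OF Q NI, where \<sigma>="(perm4 1 2 3 4)" and \<tau>="(perm4 1 2 3 4)" and nn=3])
    apply (unfold ball4 pairs4)
    using h apply (simp_all add: perm4_def)
    done
  then show ?thesis by simp
qed

lemma c010001:
  assumes Q: "quasiNil 4 d \<mu>" and NI: "NIp d" and h: "d 1 2 = 0" "d 1 3 \<noteq> 0" "d 1 4 = 0" "d 2 3 = 0" "d 2 4 = 0" "d 3 4 \<noteq> 0"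
  shows "concl d \<mu> \<or> \<not> indecomposable 4 d \<mu>"
  using NI[unfolded NIp_def, rule_format, of 1 3 4] h by simp

lemma c010010:
  assumes Q: "quasiNil 4 d \<mu>" and NI: "NIp d" and h: "d 1 2 = 0" "d 1 3 \<noteq> 0" "d 1 4 = 0" "d 2 3 = 0" "d 2 4 \<noteq> 0" "d 3 4 = 0"
  shows "concl d \<mu> \<or> \<not> indecomposable 4 d \<mu>"
proof -
  have "\<not> indecomposable 4 d \<mu>"
    apply (rule decomp[OF Q NI, where \<sigma>="(perm4 1 3 2 4)" and \<tau>="(perm4 1 3 2 4)" and nn=2])
    apply (unfold ball4 pairs4)
    using h apply (simp_all add: perm4_def)
    done
  then show ?thesis by simp
qed

lemma c010011:
  assumes Q: "quasiNil 4 d \<mu>" and NI: "NIp d" and h: "d 1 2 = 0" "d 1 3 \<noteq> 0" "d 1 4 = 0" "d 2 3 = 0" "d 2 4 \<noteq> 0" "d 3 4 \<noteq> 0"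
  shows "concl d \<mu> \<or> \<not> indecomposable 4 d \<mu>"
  using NI[unfolded NIp_def, rule_format, of 1 3 4] h by simp

lemma c010100:
  assumes Q: "quasiNil 4 d \<mu>" and NI: "NIp d" and h: "d 1 2 = 0" "d 1 3 \<noteq> 0" "d 1 4 = 0" "d 2 3 \<noteq> 0" "d 2 4 = 0" "d 3 4 = 0"
  shows "concl d \<mu> \<or> \<not> indecomposable 4 d \<mu>"
proof -
  have "\<not> indecomposable 4 d \<mu>"
    apply (rule decomp[OF Q NI, where \<sigma>="(perm4 1 2 3 4)" and \<tau>="(perm4 1 2 3 4)" and nn=3])
    apply (unfold ball4 pairs4)
    using h apply (simp_all add: perm4_def)
    done
  then show ?thesis by simp
qed

lemma c010101:
  assumes Q: "quasiNil 4 d \<mu>" and NI: "NIp d" and h: "d 1 2 = 0" "d 1 3 \<noteq> 0" "d 1 4 = 0" "d 2 3 \<noteq> 0" "d 2 4 = 0" "d 3 4 \<noteq> 0"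
  shows "concl d \<mu> \<or> \<not> indecomposable 4 d \<mu>"
  using NI[unfolded NIp_def, rule_format, of 1 3 4] h by simp

lemma c010110:
  assumes Q: "quasiNil 4 d \<mu>" and NI: "NIp d" and h: "d 1 2 = 0" "d 1 3 \<noteq> 0" "d 1 4 = 0" "d 2 3 \<noteq> 0" "d 2 4 \<noteq> 0" "d 3 4 = 0"
  shows "concl d \<mu> \<or> \<not> indecomposable 4 d \<mu>"
proof -
  have eq: "equivalent 4 d \<mu> (pat2 (d 2 4) (d 2 3) (d 1 3)) (zero_mu)"
    apply (rule equiv_via[OF Q NI, where \<sigma>="(perm4 2 1 4 3)" and \<tau>="(perm4 2 1 4 3)"])
    apply (unfold ball4 pairs4)
    using h apply (simp_all add: perm4_def pat1_def pat2_def pat3_def dual_d_def dual_mu_def zero_mu_def)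
    done
  show ?thesis unfolding concl_def equiv_or_dual_def
    apply (rule disjI1)
    apply (rule exI[of _ "(d 2 4)"], rule exI[of _ "(d 2 3)"], rule exI[of _ "(d 1 3)"], rule exI[of _ "1"])
    using eq h by simp
qed

lemma c010111:
  assumes Q: "quasiNil 4 d \<mu>" and NI: "NIp d" and h: "d 1 2 = 0" "d 1 3 \<noteq> 0" "d 1 4 = 0" "d 2 3 \<noteq> 0" "d 2 4 \<noteq> 0" "d 3 4 \<noteq> 0"
  shows "concl d \<mu> \<or> \<not> indecomposable 4 d \<mu>"
  using NI[unfolded NIp_def, rule_format, of 1 3 4] h by simp

lemma c011000:
  assumes Q: "quasiNil 4 d \<mu>" and NI: "NIp d" and h: "d 1 2 = 0" "d 1 3 \<noteq> 0" "d 1 4 \<noteq> 0" "d 2 3 = 0" "d 2 4 = 0" "d 3 4 = 0"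
  shows "concl d \<mu> \<or> \<not> indecomposable 4 d \<mu>"
proof -
  have "\<not> indecomposable 4 d \<mu>"
    apply (rule decomp[OF Q NI, where \<sigma>="(perm4 1 4 2 3)" and \<tau>="(perm4 1 3 4 2)" and nn=3])
    apply (unfold ball4 pairs4)
    using h apply (simp_all add: perm4_def)
    done
  then show ?thesis by simp
qed

lemma c011001:
  assumes Q: "quasiNil 4 d \<mu>" and NI: "NIp d" and h: "d 1 2 = 0" "d 1 3 \<noteq> 0" "d 1 4 \<noteq> 0" "d 2 3 = 0" "d 2 4 = 0" "d 3 4 \<noteq> 0"
  shows "concl d \<mu> \<or> \<not> indecomposable 4 d \<mu>"
  using NI[unfolded NIp_def, rule_format, of 1 3 4] h by simp

lemma c011010:
  assumes Q: "quasiNil 4 d \<mu>" and NI: "NIp d" and h: "d 1 2 = 0" "d 1 3 \<noteq> 0" "d 1 4 \<noteq> 0" "d 2 3 = 0" "d 2 4 \<noteq> 0" "d 3 4 = 0"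
  shows "concl d \<mu> \<or> \<not> indecomposable 4 d \<mu>"
proof -
  have eq: "equivalent 4 d \<mu> (pat2 (d 1 3) (d 1 4) (d 2 4)) (zero_mu)"
    apply (rule equiv_via[OF Q NI, where \<sigma>="(perm4 1 2 3 4)" and \<tau>="(perm4 1 2 3 4)"])
    apply (unfold ball4 pairs4)
    using h apply (simp_all add: perm4_def pat1_def pat2_def pat3_def dual_d_def dual_mu_def zero_mu_def)
    done
  show ?thesis unfolding concl_def equiv_or_dual_def
    apply (rule disjI1)
    apply (rule exI[of _ "(d 1 3)"], rule exI[of _ "(d 1 4)"], rule exI[of _ "(d 2 4)"], rule exI[of _ "1"])
    using eq h by simp
qed

lemma c011011:
  assumes Q: "quasiNil 4 d \<mu>" and NI: "NIp d" and h: "d 1 2 = 0" "d 1 3 \<noteq> 0" "d 1 4 \<noteq> 0" "d 2 3 = 0" "d 2 4 \<noteq> 0" "d 3 4 \<noteq> 0"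
  shows "concl d \<mu> \<or> \<not> indecomposable 4 d \<mu>"
  using NI[unfolded NIp_def, rule_format, of 1 3 4] h by simp

lemma c011100:
  assumes Q: "quasiNil 4 d \<mu>" and NI: "NIp d" and h: "d 1 2 = 0" "d 1 3 \<noteq> 0" "d 1 4 \<noteq> 0" "d 2 3 \<noteq> 0" "d 2 4 = 0" "d 3 4 = 0"
  shows "concl d \<mu> \<or> \<not> indecomposable 4 d \<mu>"
proof -
  have eq: "equivalent 4 d \<mu> (pat2 (d 1 4) (d 1 3) (d 2 3)) (zero_mu)"
    apply (rule equiv_via[OF Q NI, where \<sigma>="(perm4 1 2 4 3)" and \<tau>="(perm4 1 2 4 3)"])
    apply (unfold ball4 pairs4)
    using h apply (simp_all add: perm4_def pat1_def pat2_def pat3_def dual_d_def dual_mu_def zero_mu_def)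
    done
  show ?thesis unfolding concl_def equiv_or_dual_def
    apply (rule disjI1)
    apply (rule exI[of _ "(d 1 4)"], rule exI[of _ "(d 1 3)"], rule exI[of _ "(d 2 3)"], rule exI[of _ "1"])
    using eq h by simp
qed

lemma c011101:
  assumes Q: "quasiNil 4 d \<mu>" and NI: "NIp d" and h: "d 1 2 = 0" "d 1 3 \<noteq> 0" "d 1 4 \<noteq> 0" "d 2 3 \<noteq> 0" "d 2 4 = 0" "d 3 4 \<noteq> 0"
  shows "concl d \<mu> \<or> \<not> indecomposable 4 d \<mu>"
  using NI[unfolded NIp_def, rule_format, of 1 3 4] h by simp

lemma c011110:
  assumes Q: "quasiNil 4 d \<mu>" and NI: "NIp d" and h: "d 1 2 = 0" "d 1 3 \<noteq> 0" "d 1 4 \<noteq> 0" "d 2 3 \<noteq> 0" "d 2 4 \<noteq> 0" "d 3 4 = 0"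
  shows "concl d \<mu> \<or> \<not> indecomposable 4 d \<mu>"
proof -
  have eq: "equivalent 4 d \<mu> (pat3 (d 1 3) (d 1 4) (d 2 3) (d 2 4)) (zero_mu)"
    apply (rule equiv_via[OF Q NI, where \<sigma>="(perm4 1 2 3 4)" and \<tau>="(perm4 1 2 3 4)"])
    apply (unfold ball4 pairs4)
    using h apply (simp_all add: perm4_def pat1_def pat2_def pat3_def dual_d_def dual_mu_def zero_mu_def)
    done
  show ?thesis unfolding concl_def equiv_or_dual_def
    apply (rule disjI1)
    apply (rule exI[of _ "(d 1 3)"], rule exI[of _ "(d 1 4)"], rule exI[of _ "(d 2 3)"], rule exI[of _ "(d 2 4)"])
    using eq h by simp
qed

lemma c011111:
  assumes Q: "quasiNil 4 d \<mu>" and NI: "NIp d" and h: "d 1 2 = 0" "d 1 3 \<noteq> 0" "d 1 4 \<noteq> 0" "d 2 3 \<noteq> 0" "d 2 4 \<noteq> 0" "d 3 4 \<noteq> 0"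
  shows "concl d \<mu> \<or> \<not> indecomposable 4 d \<mu>"
  using NI[unfolded NIp_def, rule_format, of 1 3 4] h by simp

lemma c100000:
  assumes Q: "quasiNil 4 d \<mu>" and NI: "NIp d" and h: "d 1 2 \<noteq> 0" "d 1 3 = 0" "d 1 4 = 0" "d 2 3 = 0" "d 2 4 = 0" "d 3 4 = 0"
  shows "concl d \<mu> \<or> \<not> indecomposable 4 d \<mu>"
proof -
  have "\<not> indecomposable 4 d \<mu>"
    apply (rule decomp[OF Q NI, where \<sigma>="(perm4 1 2 3 4)" and \<tau>="(perm4 1 2 3 4)" and nn=2])
    apply (unfold ball4 pairs4)
    using h apply (simp_all add: perm4_def)
    done
  then show ?thesis by simp
qed

lemma c100001:
  assumes Q: "quasiNil 4 d \<mu>" and NI: "NIp d" and h: "d 1 2 \<noteq> 0" "d 1 3 = 0" "d 1 4 = 0" "d 2 3 = 0" "d 2 4 = 0" "d 3 4 \<noteq> 0"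
  shows "concl d \<mu> \<or> \<not> indecomposable 4 d \<mu>"
proof -
  have "\<not> indecomposable 4 d \<mu>"
    apply (rule decomp[OF Q NI, where \<sigma>="(perm4 1 2 3 4)" and \<tau>="(perm4 1 2 3 4)" and nn=2])
    apply (unfold ball4 pairs4)
    using h apply (simp_all add: perm4_def)
    done
  then show ?thesis by simp
qed

lemma c100010:
  assumes Q: "quasiNil 4 d \<mu>" and NI: "NIp d" and h: "d 1 2 \<noteq> 0" "d 1 3 = 0" "d 1 4 = 0" "d 2 3 = 0" "d 2 4 \<noteq> 0" "d 3 4 = 0"
  shows "concl d \<mu> \<or> \<not> indecomposable 4 d \<mu>"
  using NI[unfolded NIp_def, rule_format, of 1 2 4] h by simp

lemma c100011:
  assumes Q: "quasiNil 4 d \<mu>" and NI: "NIp d" and h: "d 1 2 \<noteq> 0" "d 1 3 = 0" "d 1 4 = 0" "d 2 3 = 0" "d 2 4 \<noteq> 0" "d 3 4 \<noteq> 0"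
  shows "concl d \<mu> \<or> \<not> indecomposable 4 d \<mu>"
  using NI[unfolded NIp_def, rule_format, of 1 2 4] h by simp

lemma c100100:
  assumes Q: "quasiNil 4 d \<mu>" and NI: "NIp d" and h: "d 1 2 \<noteq> 0" "d 1 3 = 0" "d 1 4 = 0" "d 2 3 \<noteq> 0" "d 2 4 = 0" "d 3 4 = 0"
  shows "concl d \<mu> \<or> \<not> indecomposable 4 d \<mu>"
  using NI[unfolded NIp_def, rule_format, of 1 2 3] h by simp

lemma c100101:
  assumes Q: "quasiNil 4 d \<mu>" and NI: "NIp d" and h: "d 1 2 \<noteq> 0" "d 1 3 = 0" "d 1 4 = 0" "d 2 3 \<noteq> 0" "d 2 4 = 0" "d 3 4 \<noteq> 0"
  shows "concl d \<mu> \<or> \<not> indecomposable 4 d \<mu>"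
  using NI[unfolded NIp_def, rule_format, of 1 2 3] h by simp

lemma c100110:
  assumes Q: "quasiNil 4 d \<mu>" and NI: "NIp d" and h: "d 1 2 \<noteq> 0" "d 1 3 = 0" "d 1 4 = 0" "d 2 3 \<noteq> 0" "d 2 4 \<noteq> 0" "d 3 4 = 0"
  shows "concl d \<mu> \<or> \<not> indecomposable 4 d \<mu>"
  using NI[unfolded NIp_def, rule_format, of 1 2 3] h by simp

lemma c100111:
  assumes Q: "quasiNil 4 d \<mu>" and NI: "NIp d" and h: "d 1 2 \<noteq> 0" "d 1 3 = 0" "d 1 4 = 0" "d 2 3 \<noteq> 0" "d 2 4 \<noteq> 0" "d 3 4 \<noteq> 0"
  shows "concl d \<mu> \<or> \<not> indecomposable 4 d \<mu>"
  using NI[unfolded NIp_def, rule_format, of 1 2 3] h by simp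

lemma c101000:
  assumes Q: "quasiNil 4 d \<mu>" and NI: "NIp d" and h: "d 1 2 \<noteq> 0" "d 1 3 = 0" "d 1 4 \<noteq> 0" "d 2 3 = 0" "d 2 4 = 0" "d 3 4 = 0"
  shows "concl d \<mu> \<or> \<not> indecomposable 4 d \<mu>"
proof -
  have "\<not> indecomposable 4 d \<mu>"
    apply (rule decomp[OF Q NI, where \<sigma>="(perm4 1 2 4 3)" and \<tau>="(perm4 1 2 4 3)" and nn=3])
    apply (unfold ball4 pairs4)
    using h apply (simp_all add: perm4_def)
    done
  then show ?thesis by simp
qed

lemma c101001:
  assumes Q: "quasiNil 4 d \<mu>" and NI: "NIp d" and h: "d 1 2 \<noteq> 0" "d 1 3 = 0" "d 1 4 \<noteq> 0" "d 2 3 = 0" "d 2 4 = 0" "d 3 4 \<noteq> 0"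
  shows "concl d \<mu> \<or> \<not> indecomposable 4 d \<mu>"
proof -
  have eq: "equivalent 4 d \<mu> (pat2 (d 1 2) (d 1 4) (d 3 4)) (zero_mu)"
    apply (rule equiv_via[OF Q NI, where \<sigma>="(perm4 1 3 2 4)" and \<tau>="(perm4 1 3 2 4)"])
    apply (unfold ball4 pairs4)
    using h apply (simp_all add: perm4_def pat1_def pat2_def pat3_def dual_d_def dual_mu_def zero_mu_def)
    done
  show ?thesis unfolding concl_def equiv_or_dual_def
    apply (rule disjI1)
    apply (rule exI[of _ "(d 1 2)"], rule exI[of _ "(d 1 4)"], rule exI[of _ "(d 3 4)"], rule exI[of _ "1"])
    using eq h by simp
qed

lemma c101010:
  assumes Q: "quasiNil 4 d \<mu>" and NI: "NIp d" and h: "d 1 2 \<noteq> 0" "d 1 3 = 0" "d 1 4 \<noteq> 0" "d 2 3 = 0" "d 2 4 \<noteq> 0" "d 3 4 = 0"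
  shows "concl d \<mu> \<or> \<not> indecomposable 4 d \<mu>"
  using NI[unfolded NIp_def, rule_format, of 1 2 4] h by simp

lemma c101011:
  assumes Q: "quasiNil 4 d \<mu>" and NI: "NIp d" and h: "d 1 2 \<noteq> 0" "d 1 3 = 0" "d 1 4 \<noteq> 0" "d 2 3 = 0" "d 2 4 \<noteq> 0" "d 3 4 \<noteq> 0"
  shows "concl d \<mu> \<or> \<not> indecomposable 4 d \<mu>"
  using NI[unfolded NIp_def, rule_format, of 1 2 4] h by simp

lemma c101100:
  assumes Q: "quasiNil 4 d \<mu>" and NI: "NIp d" and h: "d 1 2 \<noteq> 0" "d 1 3 = 0" "d 1 4 \<noteq> 0" "d 2 3 \<noteq> 0" "d 2 4 = 0" "d 3 4 = 0"
  shows "concl d \<mu> \<or> \<not> indecomposable 4 d \<mu>"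
  using NI[unfolded NIp_def, rule_format, of 1 2 3] h by simp

lemma c101101:
  assumes Q: "quasiNil 4 d \<mu>" and NI: "NIp d" and h: "d 1 2 \<noteq> 0" "d 1 3 = 0" "d 1 4 \<noteq> 0" "d 2 3 \<noteq> 0" "d 2 4 = 0" "d 3 4 \<noteq> 0"
  shows "concl d \<mu> \<or> \<not> indecomposable 4 d \<mu>"
  using NI[unfolded NIp_def, rule_format, of 1 2 3] h by simp

lemma c101110:
  assumes Q: "quasiNil 4 d \<mu>" and NI: "NIp d" and h: "d 1 2 \<noteq> 0" "d 1 3 = 0" "d 1 4 \<noteq> 0" "d 2 3 \<noteq> 0" "d 2 4 \<noteq> 0" "d 3 4 = 0"
  shows "concl d \<mu> \<or> \<not> indecomposable 4 d \<mu>"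
  using NI[unfolded NIp_def, rule_format, of 1 2 3] h by simp

lemma c101111:
  assumes Q: "quasiNil 4 d \<mu>" and NI: "NIp d" and h: "d 1 2 \<noteq> 0" "d 1 3 = 0" "d 1 4 \<noteq> 0" "d 2 3 \<noteq> 0" "d 2 4 \<noteq> 0" "d 3 4 \<noteq> 0"
  shows "concl d \<mu> \<or> \<not> indecomposable 4 d \<mu>"
  using NI[unfolded NIp_def, rule_format, of 1 2 3] h by simp

lemma c110000:
  assumes Q: "quasiNil 4 d \<mu>" and NI: "NIp d" and h: "d 1 2 \<noteq> 0" "d 1 3 \<noteq> 0" "d 1 4 = 0" "d 2 3 = 0" "d 2 4 = 0" "d 3 4 = 0"
  shows "concl d \<mu> \<or> \<not> indecomposable 4 d \<mu>"
proof -
  have "\<not> indecomposable 4 d \<mu>"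
    apply (rule decomp[OF Q NI, where \<sigma>="(perm4 1 2 3 4)" and \<tau>="(perm4 1 2 3 4)" and nn=3])
    apply (unfold ball4 pairs4)
    using h apply (simp_all add: perm4_def)
    done
  then show ?thesis by simp
qed

lemma c110001:
  assumes Q: "quasiNil 4 d \<mu>" and NI: "NIp d" and h: "d 1 2 \<noteq> 0" "d 1 3 \<noteq> 0" "d 1 4 = 0" "d 2 3 = 0" "d 2 4 = 0" "d 3 4 \<noteq> 0"
  shows "concl d \<mu> \<or> \<not> indecomposable 4 d \<mu>"
  using NI[unfolded NIp_def, rule_format, of 1 3 4] h by simp

lemma c110010:
  assumes Q: "quasiNil 4 d \<mu>" and NI: "NIp d" and h: "d 1 2 \<noteq> 0" "d 1 3 \<noteq> 0" "d 1 4 = 0" "d 2 3 = 0" "d 2 4 \<noteq> 0" "d 3 4 = 0"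
  shows "concl d \<mu> \<or> \<not> indecomposable 4 d \<mu>"
  using NI[unfolded NIp_def, rule_format, of 1 2 4] h by simp

lemma c110011:
  assumes Q: "quasiNil 4 d \<mu>" and NI: "NIp d" and h: "d 1 2 \<noteq> 0" "d 1 3 \<noteq> 0" "d 1 4 = 0" "d 2 3 = 0" "d 2 4 \<noteq> 0" "d 3 4 \<noteq> 0"
  shows "concl d \<mu> \<or> \<not> indecomposable 4 d \<mu>"
  using NI[unfolded NIp_def, rule_format, of 1 2 4] h by simp

lemma c110100:
  assumes Q: "quasiNil 4 d \<mu>" and NI: "NIp d" and h: "d 1 2 \<noteq> 0" "d 1 3 \<noteq> 0" "d 1 4 = 0" "d 2 3 \<noteq> 0" "d 2 4 = 0" "d 3 4 = 0"
  shows "concl d \<mu> \<or> \<not> indecomposable 4 d \<mu>"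
  using NI[unfolded NIp_def, rule_format, of 1 2 3] h by simp

lemma c110101:
  assumes Q: "quasiNil 4 d \<mu>" and NI: "NIp d" and h: "d 1 2 \<noteq> 0" "d 1 3 \<noteq> 0" "d 1 4 = 0" "d 2 3 \<noteq> 0" "d 2 4 = 0" "d 3 4 \<noteq> 0"
  shows "concl d \<mu> \<or> \<not> indecomposable 4 d \<mu>"
  using NI[unfolded NIp_def, rule_format, of 1 2 3] h by simp

lemma c110110:
  assumes Q: "quasiNil 4 d \<mu>" and NI: "NIp d" and h: "d 1 2 \<noteq> 0" "d 1 3 \<noteq> 0" "d 1 4 = 0" "d 2 3 \<noteq> 0" "d 2 4 \<noteq> 0" "d 3 4 = 0"
  shows "concl d \<mu> \<or> \<not> indecomposable 4 d \<mu>"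
  using NI[unfolded NIp_def, rule_format, of 1 2 3] h by simp

lemma c110111:
  assumes Q: "quasiNil 4 d \<mu>" and NI: "NIp d" and h: "d 1 2 \<noteq> 0" "d 1 3 \<noteq> 0" "d 1 4 = 0" "d 2 3 \<noteq> 0" "d 2 4 \<noteq> 0" "d 3 4 \<noteq> 0"
  shows "concl d \<mu> \<or> \<not> indecomposable 4 d \<mu>"
  using NI[unfolded NIp_def, rule_format, of 1 2 3] h by simp

lemma c111000:
  assumes Q: "quasiNil 4 d \<mu>" and NI: "NIp d" and h: "d 1 2 \<noteq> 0" "d 1 3 \<noteq> 0" "d 1 4 \<noteq> 0" "d 2 3 = 0" "d 2 4 = 0" "d 3 4 = 0"
  shows "concl d \<mu> \<or> \<not> indecomposable 4 d \<mu>"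
proof -
  have eq: "equivalent 4 d \<mu> (pat1 (d 1 2) (d 1 3) (d 1 4)) (zero_mu)"
    apply (rule equiv_via[OF Q NI, where \<sigma>="(perm4 1 2 3 4)" and \<tau>="(perm4 1 2 3 4)"])
    apply (unfold ball4 pairs4)
    using h apply (simp_all add: perm4_def pat1_def pat2_def pat3_def dual_d_def dual_mu_def zero_mu_def)
    done
  show ?thesis unfolding concl_def equiv_or_dual_def
    apply (rule disjI1)
    apply (rule exI[of _ "(d 1 2)"], rule exI[of _ "(d 1 3)"], rule exI[of _ "(d 1 4)"], rule exI[of _ "1"])
    using eq h by simp
qed

lemma c111001:
  assumes Q: "quasiNil 4 d \<mu>" and NI: "NIp d" and h: "d 1 2 \<noteq> 0" "d 1 3 \<noteq> 0" "d 1 4 \<noteq> 0" "d 2 3 = 0" "d 2 4 = 0" "d 3 4 \<noteq> 0"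
  shows "concl d \<mu> \<or> \<not> indecomposable 4 d \<mu>"
  using NI[unfolded NIp_def, rule_format, of 1 3 4] h by simp

lemma c111010:
  assumes Q: "quasiNil 4 d \<mu>" and NI: "NIp d" and h: "d 1 2 \<noteq> 0" "d 1 3 \<noteq> 0" "d 1 4 \<noteq> 0" "d 2 3 = 0" "d 2 4 \<noteq> 0" "d 3 4 = 0"
  shows "concl d \<mu> \<or> \<not> indecomposable 4 d \<mu>"
  using NI[unfolded NIp_def, rule_format, of 1 2 4] h by simp

lemma c111011:
  assumes Q: "quasiNil 4 d \<mu>" and NI: "NIp d" and h: "d 1 2 \<noteq> 0" "d 1 3 \<noteq> 0" "d 1 4 \<noteq> 0" "d 2 3 = 0" "d 2 4 \<noteq> 0" "d 3 4 \<noteq> 0"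
  shows "concl d \<mu> \<or> \<not> indecomposable 4 d \<mu>"
  using NI[unfolded NIp_def, rule_format, of 1 2 4] h by simp

lemma c111100:
  assumes Q: "quasiNil 4 d \<mu>" and NI: "NIp d" and h: "d 1 2 \<noteq> 0" "d 1 3 \<noteq> 0" "d 1 4 \<noteq> 0" "d 2 3 \<noteq> 0" "d 2 4 = 0" "d 3 4 = 0"
  shows "concl d \<mu> \<or> \<not> indecomposable 4 d \<mu>"
  using NI[unfolded NIp_def, rule_format, of 1 2 3] h by simp

lemma c111101:
  assumes Q: "quasiNil 4 d \<mu>" and NI: "NIp d" and h: "d 1 2 \<noteq> 0" "d 1 3 \<noteq> 0" "d 1 4 \<noteq> 0" "d 2 3 \<noteq> 0" "d 2 4 = 0" "d 3 4 \<noteq> 0"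
  shows "concl d \<mu> \<or> \<not> indecomposable 4 d \<mu>"
  using NI[unfolded NIp_def, rule_format, of 1 2 3] h by simp

lemma c111110:
  assumes Q: "quasiNil 4 d \<mu>" and NI: "NIp d" and h: "d 1 2 \<noteq> 0" "d 1 3 \<noteq> 0" "d 1 4 \<noteq> 0" "d 2 3 \<noteq> 0" "d 2 4 \<noteq> 0" "d 3 4 = 0"
  shows "concl d \<mu> \<or> \<not> indecomposable 4 d \<mu>"
  using NI[unfolded NIp_def, rule_format, of 1 2 3] h by simp

lemma c111111:
  assumes Q: "quasiNil 4 d \<mu>" and NI: "NIp d" and h: "d 1 2 \<noteq> 0" "d 1 3 \<noteq> 0" "d 1 4 \<noteq> 0" "d 2 3 \<noteq> 0" "d 2 4 \<noteq> 0" "d 3 4 \<noteq> 0"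
  shows "concl d \<mu> \<or> \<not> indecomposable 4 d \<mu>"
  using NI[unfolded NIp_def, rule_format, of 1 2 3] h by simp



lemma forward:
  assumes A: "clifford_nil_algebra 4 d \<mu>" and I: "indecomposable 4 d \<mu>" and N: "nil_index 4 d = 1"
  shows "concl d \<mu>"
proof -
  have Q: "quasiNil 4 d \<mu>" using A by (simp add: clifford_nil_algebra_def nil_algebra_def)
  have NI: "NIp d" by (rule nil_index_NI[OF N])
  have "concl d \<mu> \<or> \<not> indecomposable 4 d \<mu>"
    apply (cases "d 1 2 = 0"; cases "d 1 3 = 0"; cases "d 1 4 = 0"; cases "d 2 3 = 0"; cases "d 2 4 = 0"; cases "d 3 4 = 0")
    apply (rule c000000[OF Q NI]; assumption)
    apply (rule c000001[OF Q NI]; assumption)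
    apply (rule c000010[OF Q NI]; assumption)
    apply (rule c000011[OF Q NI]; assumption)
    apply (rule c000100[OF Q NI]; assumption)
    apply (rule c000101[OF Q NI]; assumption)
    apply (rule c000110[OF Q NI]; assumption)
    apply (rule c000111[OF Q NI]; assumption)
    apply (rule c001000[OF Q NI]; assumption)
    apply (rule c001001[OF Q NI]; assumption)
    apply (rule c001010[OF Q NI]; assumption)
    apply (rule c001011[OF Q NI]; assumption)
    apply (rule c001100[OF Q NI]; assumption)
    apply (rule c001101[OF Q NI]; assumption)
    apply (rule c001110[OF Q NI]; assumption)
    apply (rule c001111[OF Q NI]; assumption)
    apply (rule c010000[OF Q NI]; assumption)
    apply (rule c010001[OF Q NI]; assumption)
    apply (rule c010010[OF Q NI]; assumption)
    apply (rule c010011[OF Q NI]; assumption)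
    apply (rule c010100[OF Q NI]; assumption)
    apply (rule c010101[OF Q NI]; assumption)
    apply (rule c010110[OF Q NI]; assumption)
    apply (rule c010111[OF Q NI]; assumption)
    apply (rule c011000[OF Q NI]; assumption)
    apply (rule c011001[OF Q NI]; assumption)
    apply (rule c011010[OF Q NI]; assumption)
    apply (rule c011011[OF Q NI]; assumption)
    apply (rule c011100[OF Q NI]; assumption)
    apply (rule c011101[OF Q NI]; assumption)
    apply (rule c011110[OF Q NI]; assumption)
    apply (rule c011111[OF Q NI]; assumption)
    apply (rule c100000[OF Q NI]; assumption)
    apply (rule c100001[OF Q NI]; assumption)
    apply (rule c100010[OF Q NI]; assumption)
    apply (rule c100011[OF Q NI]; assumption)
    apply (rule c100100[OF Q NI]; assumption)
    apply (rule c100101[OF Q NI]; assumption)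
    apply (rule c100110[OF Q NI]; assumption)
    apply (rule c100111[OF Q NI]; assumption)
    apply (rule c101000[OF Q NI]; assumption)
    apply (rule c101001[OF Q NI]; assumption)
    apply (rule c101010[OF Q NI]; assumption)
    apply (rule c101011[OF Q NI]; assumption)
    apply (rule c101100[OF Q NI]; assumption)
    apply (rule c101101[OF Q NI]; assumption)
    apply (rule c101110[OF Q NI]; assumption)
    apply (rule c101111[OF Q NI]; assumption)
    apply (rule c110000[OF Q NI]; assumption)
    apply (rule c110001[OF Q NI]; assumption)
    apply (rule c110010[OF Q NI]; assumption)
    apply (rule c110011[OF Q NI]; assumption)
    apply (rule c110100[OF Q NI]; assumption)
    apply (rule c110101[OF Q NI]; assumption)
    apply (rule c110110[OF Q NI]; assumption)
    apply (rule c110111[OF Q NI]; assumption)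
    apply (rule c111000[OF Q NI]; assumption)
    apply (rule c111001[OF Q NI]; assumption)
    apply (rule c111010[OF Q NI]; assumption)
    apply (rule c111011[OF Q NI]; assumption)
    apply (rule c111100[OF Q NI]; assumption)
    apply (rule c111101[OF Q NI]; assumption)
    apply (rule c111110[OF Q NI]; assumption)
    apply (rule c111111[OF Q NI]; assumption)
    done
  with I show ?thesis by simp
qed

lemma back_pat1:
  assumes "0 < v1" "0 < v2" "0 < v3" "0 < v4"
  shows "clifford_nil_algebra 4 (pat1 v1 v2 v3) zero_mu \<and> indecomposable 4 (pat1 v1 v2 v3) zero_mu \<and>
         nil_index 4 (pat1 v1 v2 v3) = 1"
proof -
  have NI: "NIp (pat1 v1 v2 v3)"
    unfolding NIp_def triples4 by (simp add: pat1_def)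
  have i: "indecomposable 4 (pat1 v1 v2 v3) zero_mu"
    apply (rule indec)
    apply (unfold pairs4)
    using assms apply (simp add: pat1_def)
    apply blast
    done
  have n: "nil_index 4 (pat1 v1 v2 v3) = 1"
    by (rule NI_nil_index[OF NI, of 1 3]) (use assms in \<open>simp_all add: pat1_def\<close>)
  show ?thesis using NI_cnil[OF NI] i n by simp
qed

lemma back_pat2:
  assumes "0 < v1" "0 < v2" "0 < v3" "0 < v4"
  shows "clifford_nil_algebra 4 (pat2 v1 v2 v3) zero_mu \<and> indecomposable 4 (pat2 v1 v2 v3) zero_mu \<and>
         nil_index 4 (pat2 v1 v2 v3) = 1"
proof -
  have NI: "NIp (pat2 v1 v2 v3)"
    unfolding NIp_def triples4 by (simp add: pat2_def)
  have i: "indecomposable 4 (pat2 v1 v2 v3) zero_mu"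
    apply (rule indec)
    apply (unfold pairs4)
    using assms apply (simp add: pat2_def)
    apply blast
    done
  have n: "nil_index 4 (pat2 v1 v2 v3) = 1"
    by (rule NI_nil_index[OF NI, of 1 3]) (use assms in \<open>simp_all add: pat2_def\<close>)
  show ?thesis using NI_cnil[OF NI] i n by simp
qed

lemma back_pat3:
  assumes "0 < v1" "0 < v2" "0 < v3" "0 < v4"
  shows "clifford_nil_algebra 4 (pat3 v1 v2 v3 v4) zero_mu \<and> indecomposable 4 (pat3 v1 v2 v3 v4) zero_mu \<and>
         nil_index 4 (pat3 v1 v2 v3 v4) = 1"
proof -
  have NI: "NIp (pat3 v1 v2 v3 v4)"
    unfolding NIp_def triples4 by (simp add: pat3_def)
  have i: "indecomposable 4 (pat3 v1 v2 v3 v4) zero_mu"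
    apply (rule indec)
    apply (unfold pairs4)
    using assms apply (simp add: pat3_def)
    apply blast
    done
  have n: "nil_index 4 (pat3 v1 v2 v3 v4) = 1"
    by (rule NI_nil_index[OF NI, of 1 3]) (use assms in \<open>simp_all add: pat3_def\<close>)
  show ?thesis using NI_cnil[OF NI] i n by simp
qed

lemma thm_main:
  shows "(\<forall>(d::dimfam) (\<mu>::mulfam).
            clifford_nil_algebra 4 d \<mu> \<and> indecomposable 4 d \<mu> \<and> nil_index 4 d = 1 \<longrightarrow>
            (\<exists>v1 v2 v3 v4. 0 < v1 \<and> 0 < v2 \<and> 0 < v3 \<and> 0 < v4 \<and>
               (equiv_or_dual 4 d \<mu> (pat1 v1 v2 v3) zero_mu \<or>
                equiv_or_dual 4 d \<mu> (pat2 v1 v2 v3) zero_mu \<or>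
                equiv_or_dual 4 d \<mu> (pat3 v1 v2 v3 v4) zero_mu))) \<and>
         (\<forall>v1 v2 v3 v4. 0 < v1 \<and> 0 < v2 \<and> 0 < v3 \<and> 0 < v4 \<longrightarrow>
            (\<forall>D \<in> {pat1 v1 v2 v3, pat2 v1 v2 v3, pat3 v1 v2 v3 v4}.
               clifford_nil_algebra 4 D zero_mu \<and> indecomposable 4 D zero_mu \<and>
               nil_index 4 D = 1))"
proof (rule conjI)
  show "\<forall>(d::dimfam) (\<mu>::mulfam).
            clifford_nil_algebra 4 d \<mu> \<and> indecomposable 4 d \<mu> \<and> nil_index 4 d = 1 \<longrightarrow>
            (\<exists>v1 v2 v3 v4. 0 < v1 \<and> 0 < v2 \<and> 0 < v3 \<and> 0 < v4 \<and>
               (equiv_or_dual 4 d \<mu> (pat1 v1 v2 v3) zero_mu \<or>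
                equiv_or_dual 4 d \<mu> (pat2 v1 v2 v3) zero_mu \<or>
                equiv_or_dual 4 d \<mu> (pat3 v1 v2 v3 v4) zero_mu))"
    using forward unfolding concl_def by blast
next
  show "\<forall>v1 v2 v3 v4. 0 < v1 \<and> 0 < v2 \<and> 0 < v3 \<and> 0 < v4 \<longrightarrow>
            (\<forall>D \<in> {pat1 v1 v2 v3, pat2 v1 v2 v3, pat3 v1 v2 v3 v4}.
               clifford_nil_algebra 4 D zero_mu \<and> indecomposable 4 D zero_mu \<and>
               nil_index 4 D = 1)"
  proof (intro allI impI)
    fix v1 v2 v3 v4 :: nat assume h: "0 < v1 \<and> 0 < v2 \<and> 0 < v3 \<and> 0 < v4"
    show "\<forall>D \<in> {pat1 v1 v2 v3, pat2 v1 v2 v3, pat3 v1 v2 v3 v4}.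
               clifford_nil_algebra 4 D zero_mu \<and> indecomposable 4 D zero_mu \<and>
               nil_index 4 D = 1"
      using back_pat1[of v1 v2 v3 v4] back_pat2[of v1 v2 v3 v4] back_pat3[of v1 v2 v3 v4] h by simp
  qed
qed


theorem theorem1:
  shows "(\<forall>(d::dimfam) (\<mu>::mulfam).
            clifford_nil_algebra 4 d \<mu> \<and> indecomposable 4 d \<mu> \<and> nil_index 4 d = 1 \<longrightarrow>
            (\<exists>v1 v2 v3 v4. 0 < v1 \<and> 0 < v2 \<and> 0 < v3 \<and> 0 < v4 \<and>
               (equiv_or_dual 4 d \<mu> (pat1 v1 v2 v3) zero_mu \<or>
                equiv_or_dual 4 d \<mu> (pat2 v1 v2 v3) zero_mu \<or>
                equiv_or_dual 4 d \<mu> (pat3 v1 v2 v3 v4) zero_mu))) \<and>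
         (\<forall>v1 v2 v3 v4. 0 < v1 \<and> 0 < v2 \<and> 0 < v3 \<and> 0 < v4 \<longrightarrow>
            (\<forall>D \<in> {pat1 v1 v2 v3, pat2 v1 v2 v3, pat3 v1 v2 v3 v4}.
               clifford_nil_algebra 4 D zero_mu \<and> indecomposable 4 D zero_mu \<and>
               nil_index 4 D = 1))"
  by (rule thm_main)

end
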